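(* Let $0<b<1$ and $0<\alpha\le 1$. Let $\{Z(t),t\ge0\}$ be an $I_0$-valued Lévy process. Consider the $I_0$-valued first-order autoregressive scheme $$X_n=b\otimes X_{n-1}+\varepsilon_n,\qquad n=1,2,\dots,$$ where $X_0\overset{d}{=}Z(1)$, the innovations $\{\varepsilon_n\}$ are i.i.d. with $\varepsilon_n\overset{d}{=}b\otimes Z(b^{-\alpha}-1)$ for all $n$, and $\varepsilon_n$ is independent of $X_{n-1}$ and of the thinning at step $n$. Then: if $\{Z(t)\}$ is $(b^\alpha,\tfrac1\alpha)$-semi-selfsimilar, the sequence $\{X_n\}$ is stationary with $I_0$-valued semi-stable$(b^\alpha,b)$ marginals. Conversely, if $\{X_n\}$ is stationary, then its marginals are $I_0$-valued semi-stable$(b^\alpha,b)$ and $\{Z(t)\}$ is $(b^\alpha,\tfrac1\alpha)$-semi-selfsimilar.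
   Context: $I_0=\{0,1,2,\dots\}$. A Lévy process is a process with stationary and independent increments and $Z(0)=0$; if $P(s)$ is the probability generating function (PGF) of $Z(1)$ then that of $Z(t)$ is $P(s)^t$. Binomial thinning: for $0<c<1$ and an $I_0$-valued random variable $X$, $c\otimes X=\sum_{i=1}^{X}Y_i$ with $\{Y_i\}$ i.i.d. Bernoulli, independent of $X$, $P\{Y_i=1\}=c$; its PGF is $P(1-c+cs)$ if $X$ has PGF $P(s)$. An $I_0$-valued process $\{Z(t),t\ge0\}$ is $(a,H)$-semi-selfsimilar, with $0<a<1$, $H>0$, if $\{Z(at)\}\overset{d}{=}\{a^H\otimes Z(t)\}$. An $I_0$-valued random variable with PGF $P(s)$ is discrete semi-stable$(a,b)$ if $P(s)\neq0$ and $\{P(s)\}^a=P(1-b+bs)$ for all $0\le s\le1$, with $0<b<1$ and $b=a^{1/\alpha}$, $\alpha\in(0,1]$. All notions are in the strict sense. *)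

theory Defs
  imports "HOL-Probability.Probability"
begin

text \<open>Laws of I_0-valued random variables are modelled as nat pmf's.\<close>

definition pgf :: "nat pmf \<Rightarrow> real \<Rightarrow> real" where
  "pgf p s = measure_pmf.expectation p (\<lambda>n. s ^ n)"

definition thin :: "real \<Rightarrow> nat pmf \<Rightarrow> nat pmf" where
  "thin c p = bind_pmf p (\<lambda>x. binomial_pmf x c)"

text \<open>An I_0-valued Levy process is represented by the family mu t of laws of Z(t):
  Z(0)=0, stationary independent increments (so the laws form a convolution
  semigroup), and (as stated in the context) the PGF of Z(t) is P(s)^t.\<close>
definition levy_process :: "(real \<Rightarrow> nat pmf) \<Rightarrow> bool" where
  "levy_process \<mu> \<longleftrightarrow>
     \<mu> 0 = return_pmf 0 \<and>
     (\<forall>s t. 0 \<le> s \<longrightarrow> 0 \<le> t \<longrightarrow>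
        \<mu> (s + t) = map_pmf (\<lambda>(x, y). x + y) (pair_pmf (\<mu> s) (\<mu> t))) \<and>
     (\<forall>t>0. \<forall>s\<in>{0..1}. pgf (\<mu> t) s = pgf (\<mu> 1) s powr t)"

text \<open>Finite-dimensional law of (Z(t_1),...,Z(t_k)) for 0 \<le> t_1 \<le> ... \<le> t_k,
  built from independent stationary increments starting at Z(0)=0.\<close>
fun levy_fdd_aux :: "(real \<Rightarrow> nat pmf) \<Rightarrow> real \<Rightarrow> nat \<Rightarrow> real list \<Rightarrow> nat list pmf" where
  "levy_fdd_aux \<mu> t0 z0 [] = return_pmf []"
| "levy_fdd_aux \<mu> t0 z0 (t # ts) =
     bind_pmf (\<mu> (t - t0)) (\<lambda>d. map_pmf (\<lambda>zs. (z0 + d) # zs) (levy_fdd_aux \<mu> t (z0 + d) ts))"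

definition levy_fdd :: "(real \<Rightarrow> nat pmf) \<Rightarrow> real list \<Rightarrow> nat list pmf" where
  "levy_fdd \<mu> ts = levy_fdd_aux \<mu> 0 0 ts"

text \<open>Joint law of (c (x) z_1, ..., c (x) z_k) for a nondecreasing path z_1 \<le> ... \<le> z_k,
  all thinned with one common i.i.d. Bernoulli(c) sequence: the thinned values are
  cumulative sums of independent Binomial(z_j - z_{j-1}, c) variables.\<close>
fun thin_path_aux :: "real \<Rightarrow> nat \<Rightarrow> nat \<Rightarrow> nat list \<Rightarrow> nat list pmf" where
  "thin_path_aux c z0 w0 [] = return_pmf []"
| "thin_path_aux c z0 w0 (z # zs) =
     bind_pmf (binomial_pmf (z - z0) c) (\<lambda>d. map_pmf (\<lambda>ws. (w0 + d) # ws) (thin_path_aux c z (w0 + d) zs))"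

definition thin_path :: "real \<Rightarrow> nat list \<Rightarrow> nat list pmf" where
  "thin_path c zs = thin_path_aux c 0 0 zs"

text \<open>(a,H)-semi-selfsimilarity: the finite-dimensional laws of {Z(a t)} and
  {a^H (x) Z(t)} coincide (it suffices to compare at ordered nonnegative times).\<close>
definition semi_selfsimilar :: "(real \<Rightarrow> nat pmf) \<Rightarrow> real \<Rightarrow> real \<Rightarrow> bool" where
  "semi_selfsimilar \<mu> a H \<longleftrightarrow>
     (\<forall>ts. sorted ts \<longrightarrow> (\<forall>t\<in>set ts. 0 \<le> t) \<longrightarrow>
        levy_fdd \<mu> (map (\<lambda>t. a * t) ts) = bind_pmf (levy_fdd \<mu> ts) (thin_path (a powr H)))"

definition discrete_semistable :: "real \<Rightarrow> real \<Rightarrow> nat pmf \<Rightarrow> bool" where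
  "discrete_semistable a b p \<longleftrightarrow>
     0 < a \<and> a < 1 \<and> 0 < b \<and> b < 1 \<and> (\<exists>\<alpha>. 0 < \<alpha> \<and> \<alpha> \<le> 1 \<and> b = a powr (1 / \<alpha>)) \<and>
     (\<forall>s\<in>{0..1}. pgf p s \<noteq> 0 \<and> pgf p s powr a = pgf p (1 - b + b * s))"

definition ar_step :: "real \<Rightarrow> nat pmf \<Rightarrow> nat \<Rightarrow> nat pmf" where
  "ar_step b e x = map_pmf (\<lambda>(y, z). y + z) (pair_pmf (binomial_pmf x b) e)"

fun ar_path :: "real \<Rightarrow> nat pmf \<Rightarrow> nat pmf \<Rightarrow> nat \<Rightarrow> nat list pmf" where
  "ar_path b e x0 0 = map_pmf (\<lambda>x. [x]) x0"
| "ar_path b e x0 (Suc n) =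
     bind_pmf (ar_path b e x0 n) (\<lambda>xs. map_pmf (\<lambda>y. xs @ [y]) (ar_step b e (last xs)))"

definition ar_marg :: "real \<Rightarrow> nat pmf \<Rightarrow> nat pmf \<Rightarrow> nat \<Rightarrow> nat pmf" where
  "ar_marg b e x0 n = map_pmf (\<lambda>xs. xs ! n) (ar_path b e x0 n)"

definition ar_stationary :: "real \<Rightarrow> nat pmf \<Rightarrow> nat pmf \<Rightarrow> bool" where
  "ar_stationary b e x0 \<longleftrightarrow>
     (\<forall>n k. map_pmf (drop n) (ar_path b e x0 (n + k)) = ar_path b e x0 k)"

end

theory Submission imports Defs begin

lemma int_bind_pmf:
  fixes f :: "'b \<Rightarrow> real"
  assumes "\<And>x. 0 \<le> f x" "\<And>x. f x \<le> 1"
  shows "(\<integral>x. f x \<partial>measure_pmf (bind_pmf M N)) = (\<integral>y. (\<integral>x. f x \<partial>measure_pmf (N y)) \<partial>measure_pmf M)"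
proof -
  have int: "integrable (measure_pmf K) f" for K
    by (rule measure_pmf.integrable_const_bound[where B=1]) (use assms in auto)
  have "(\<integral>x. f x \<partial>measure_pmf (bind_pmf M N)) = enn2real (\<integral>\<^sup>+x. ennreal (f x) \<partial>measure_pmf (bind_pmf M N))"
    by (rule integral_eq_nn_integral) (use assms in auto)
  also have "\<dots> = enn2real (\<integral>\<^sup>+y. (\<integral>\<^sup>+x. ennreal (f x) \<partial>measure_pmf (N y)) \<partial>measure_pmf M)"
    by simp
  also have "\<dots> = enn2real (\<integral>\<^sup>+y. ennreal (\<integral>x. f x \<partial>measure_pmf (N y)) \<partial>measure_pmf M)"
    by (subst nn_integral_eq_integral[OF int]) (use assms in auto)
  also have "\<dots> = (\<integral>y. (\<integral>x. f x \<partial>measure_pmf (N y)) \<partial>measure_pmf M)"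
    by (rule integral_eq_nn_integral[symmetric]) (use assms in \<open>auto intro!: integral_nonneg\<close>)
  finally show ?thesis .
qed

lemma pgf_bounds: "0 \<le> s \<Longrightarrow> s \<le> 1 \<Longrightarrow> 0 \<le> pgf p s \<and> pgf p s \<le> 1"
  unfolding pgf_def
  by (auto intro!: integral_nonneg measure_pmf.integral_le_const measure_pmf.integrable_const_bound[where B=1] power_le_one)

lemma pgf_map: "pgf (map_pmf f p) s = measure_pmf.expectation p (\<lambda>x. s ^ f x)"
  unfolding pgf_def by simp

lemma pgf_bind:
  assumes "0 \<le> s" "s \<le> 1"
  shows "pgf (bind_pmf M N) s = measure_pmf.expectation M (\<lambda>y. pgf (N y) s)"
  unfolding pgf_def using assms by (intro int_bind_pmf) (auto intro: power_le_one)

lemma pgf_sum: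
  assumes "0 \<le> s" "s \<le> 1"
  shows "pgf (map_pmf (\<lambda>(x, y). x + y) (pair_pmf p q)) s = pgf p s * pgf q s"
proof -
  have "pgf (map_pmf (\<lambda>(x, y). x + y) (pair_pmf p q)) s =
     pgf (bind_pmf p (\<lambda>x. map_pmf (\<lambda>y. x + y) q)) s"
    unfolding pair_pmf_def map_bind_pmf map_return_pmf
    by (simp add: map_pmf_def)
  also have "\<dots> = measure_pmf.expectation p (\<lambda>x. s ^ x * pgf q s)"
    using assms by (subst pgf_bind) (auto simp: pgf_map power_add pgf_def)
  also have "\<dots> = pgf p s * pgf q s"
    unfolding pgf_def by simp
  finally show ?thesis .
qed

lemma pgf_binomial:
  assumes "0 \<le> c" "c \<le> 1"
  shows "pgf (binomial_pmf n c) s = (1 - c + c * s) ^ n"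
proof -
  have "pgf (binomial_pmf n c) s = (\<Sum>k\<le>n. s ^ k * pmf (binomial_pmf n c) k)"
    unfolding pgf_def
    by (rule integral_measure_pmf_real) (use assms in \<open>auto simp: set_pmf_binomial_eq split: if_splits\<close>)
  also have "\<dots> = (\<Sum>k\<le>n. of_nat (n choose k) * (c * s) ^ k * (1 - c) ^ (n - k))"
    using assms by (intro sum.cong) (auto simp: power_mult_distrib)
  also have "\<dots> = (c * s + (1 - c)) ^ n"
    by (rule binomial_ring[symmetric])
  finally show ?thesis by (simp add: algebra_simps)
qed

lemma pgf_thin:
  assumes "0 \<le> c" "c \<le> 1" "0 \<le> s" "s \<le> 1"
  shows "pgf (thin c p) s = pgf p (1 - c + c * s)"
  unfolding thin_def using assms by (subst pgf_bind) (auto simp: pgf_binomial[symmetric] pgf_def)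

lemma pgf_sums:
  assumes "0 \<le> s" "s \<le> 1"
  shows "(\<lambda>n. pmf p n * s ^ n) sums pgf p s"
proof -
  have int: "integrable (measure_pmf p) (\<lambda>n. s ^ n)"
    by (rule measure_pmf.integrable_const_bound[where B=1]) (use assms in \<open>auto intro: power_le_one\<close>)
  have "integrable (count_space UNIV) (\<lambda>n. pmf p n *\<^sub>R s ^ n)"
    using int unfolding measure_pmf_eq_density by (subst (asm) integrable_density) auto
  then have "(\<lambda>n. pmf p n * s ^ n) sums (\<integral>n. pmf p n *\<^sub>R s ^ n \<partial>count_space UNIV)"
    by (auto dest: sums_integral_count_space_nat)
  also have "(\<integral>n. pmf p n *\<^sub>R s ^ n \<partial>count_space UNIV) = pgf p s"
    unfolding pgf_def measure_pmf_eq_density by (subst integral_density) auto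
  finally show ?thesis .
qed

lemma coeff_unique:
  fixes d :: "nat \<Rightarrow> real"
  assumes bd: "\<And>n. \<bar>d n\<bar> \<le> 2"
    and z: "\<And>x. 0 < x \<Longrightarrow> x < 1 \<Longrightarrow> (\<lambda>n. d n * x ^ n) sums 0"
  shows "d k = 0"
proof (induction k rule: less_induct)
  case (less k)
  have summ: "summable (\<lambda>m. d (m + k) * x ^ m)" if "norm x < 1" for x :: real
  proof (rule summable_comparison_test[where g="\<lambda>m. 2 * \<bar>x\<bar> ^ m"])
    show "\<exists>N. \<forall>n\<ge>N. norm (d (n + k) * x ^ n) \<le> 2 * \<bar>x\<bar> ^ n"
      using bd by (auto simp: abs_mult power_abs intro!: mult_right_mono)
    show "summable (\<lambda>m. 2 * \<bar>x\<bar> ^ m)"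
      using that by (intro summable_mult summable_geometric) auto
  qed
  define g where "g x = (\<Sum>m. d (m + k) * x ^ m)" for x :: real
  have "(g \<longlongrightarrow> d (0 + k)) (at 0)"
    by (rule powser_limit_0[where s=1]) (auto simp: g_def intro!: summable_sums summ)
  then have lim: "(g \<longlongrightarrow> d k) (at_right 0)"
    by (simp add: filterlim_at_split)
  have g0: "g x = 0" if "0 < x" "x < 1" for x
  proof -
    have "(\<lambda>m. d (m + k) * x ^ (m + k)) sums (0 - sum (\<lambda>n. d n * x ^ n) {..<k})"
      using sums_split_initial_segment[OF z[OF that], of k] by simp
    also have "sum (\<lambda>n. d n * x ^ n) {..<k} = 0"
      using less by (intro sum.neutral) auto
    finally have "(\<lambda>m. x ^ k * (d (m + k) * x ^ m)) sums (x ^ k * 0)"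
      by (simp add: power_add algebra_simps)
    then have "(\<lambda>m. d (m + k) * x ^ m) sums 0"
      using that by (subst (asm) sums_mult_iff) auto
    then show ?thesis unfolding g_def by (rule sums_unique[symmetric])
  qed
  have ev: "eventually (\<lambda>x. g x = 0) (at_right (0::real))"
    unfolding eventually_at_right_field using g0 by (intro exI[of _ 1]) auto
  have "(g \<longlongrightarrow> 0) (at_right 0)"
    by (rule tendsto_eventually[OF ev])
  from tendsto_unique[OF _ lim this] show ?case by simp
qed

lemma pgf_unique:
  assumes "\<And>s. 0 \<le> s \<Longrightarrow> s \<le> 1 \<Longrightarrow> pgf p s = pgf q s"
  shows "p = q"
proof (rule pmf_eqI)
  fix k
  have "(\<lambda>n. pmf p n - pmf q n) k = 0"
  proof (rule coeff_unique)
    show "\<bar>pmf p n - pmf q n\<bar> \<le> 2" for n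
      using pmf_le_1[of p n] pmf_le_1[of q n] pmf_nonneg[of p n] pmf_nonneg[of q n] by linarith
    fix x :: real assume "0 < x" "x < 1"
    then have "(\<lambda>n. pmf p n * x ^ n - pmf q n * x ^ n) sums (pgf p x - pgf q x)"
      by (intro sums_diff pgf_sums) auto
    then show "(\<lambda>n. (pmf p n - pmf q n) * x ^ n) sums 0"
      using assms[of x] \<open>0 < x\<close> \<open>x < 1\<close> by (simp add: algebra_simps)
  qed
  then show "pmf p k = pmf q k" by simp
qed

lemma pgf_pos:
  assumes "0 < s" "s \<le> 1"
  shows "0 < pgf p s"
proof -
  have "0 \<le> s" using assms by simp
  have int: "integrable (measure_pmf p) (\<lambda>n. s ^ n)"
    by (intro measure_pmf.integrable_const_bound[where B=1] AE_I2) (use assms \<open>0 \<le> s\<close> in \<open>auto intro!: power_le_one\<close>)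
  have ge: "0 \<le> pgf p s" using pgf_bounds[of s p] assms by auto
  moreover have "pgf p s \<noteq> 0"
  proof
    assume "pgf p s = 0"
    then have "AE n in measure_pmf p. s ^ n = 0"
      unfolding pgf_def using int assms by (subst (asm) integral_nonneg_eq_0_iff_AE) auto
    then have "\<forall>n\<in>set_pmf p. s ^ n = 0" by (simp add: AE_measure_pmf_iff)
    moreover obtain n where "n \<in> set_pmf p" using set_pmf_not_empty[of p] by blast
    ultimately show False using assms by auto
  qed
  ultimately show ?thesis by linarith
qed

lemma pgf_step:
  assumes "0 \<le> b" "b \<le> 1" "0 \<le> s" "s \<le> 1"
  shows "pgf (bind_pmf x0 (ar_step b e)) s = pgf x0 (1 - b + b * s) * pgf e s"
proof -
  have "pgf (bind_pmf x0 (ar_step b e)) s = measure_pmf.expectation x0 (\<lambda>x. pgf (ar_step b e x) s)"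
    by (rule pgf_bind[OF assms(3,4)])
  also have "\<dots> = measure_pmf.expectation x0 (\<lambda>x. (1 - b + b * s) ^ x * pgf e s)"
    unfolding ar_step_def using assms by (simp add: pgf_sum pgf_binomial)
  also have "\<dots> = pgf x0 (1 - b + b * s) * pgf e s"
    unfolding pgf_def by simp
  finally show ?thesis .
qed

lemma ar_path_len: "xs \<in> set_pmf (ar_path b e x0 n) \<Longrightarrow> length xs = Suc n"
  by (induction n arbitrary: xs) auto

lemma ar_marg_Suc: "ar_marg b e x0 (Suc n) = bind_pmf (ar_marg b e x0 n) (ar_step b e)"
proof -
  have "ar_marg b e x0 (Suc n) = bind_pmf (ar_path b e x0 n) (\<lambda>xs. ar_step b e (xs ! n))"
    unfolding ar_marg_def
  proof (simp add: map_bind_pmf map_pmf_comp, intro bind_pmf_cong refl)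
    fix xs assume "xs \<in> set_pmf (ar_path b e x0 n)"
    then have l: "length xs = Suc n" by (rule ar_path_len)
    then have "last xs = xs ! n" by (metis last_conv_nth diff_Suc_1 list.size(3) nat.distinct(1))
    then show "map_pmf (\<lambda>y. (xs @ [y]) ! Suc n) (ar_step b e (last xs)) = ar_step b e (xs ! n)"
      using l by (simp add: nth_append)
  qed
  also have "\<dots> = bind_pmf (ar_marg b e x0 n) (ar_step b e)"
    unfolding ar_marg_def by (simp add: bind_map_pmf)
  finally show ?thesis .
qed

lemma ar_marg_0: "ar_marg b e x0 0 = x0"
  unfolding ar_marg_def by (simp add: map_pmf_comp)

lemma ar_invariant:
  assumes "bind_pmf x0 (ar_step b e) = x0"
  shows "ar_marg b e x0 n = x0" "ar_stationary b e x0"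
proof -
  show mg: "ar_marg b e x0 n = x0" for n
    by (induction n) (use assms in \<open>auto simp: ar_marg_0 ar_marg_Suc\<close>)
  show "ar_stationary b e x0"
    unfolding ar_stationary_def
  proof (intro allI)
    fix n k
    show "map_pmf (drop n) (ar_path b e x0 (n + k)) = ar_path b e x0 k"
    proof (induction k)
      case 0
      have "map_pmf (drop n) (ar_path b e x0 n) = map_pmf (\<lambda>xs. [xs ! n]) (ar_path b e x0 n)"
        by (intro map_pmf_cong refl) (auto dest!: ar_path_len simp flip: Cons_nth_drop_Suc)
      also have "\<dots> = map_pmf (\<lambda>x. [x]) (ar_marg b e x0 n)"
        unfolding ar_marg_def by (simp add: map_pmf_comp)
      finally show ?case using mg[of n] by simp
    next
      case (Suc k)
      have "map_pmf (drop n) (ar_path b e x0 (n + Suc k)) =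
         bind_pmf (ar_path b e x0 (n + k)) (\<lambda>xs. map_pmf (\<lambda>y. drop n xs @ [y]) (ar_step b e (last (drop n xs))))"
        by (auto simp: map_bind_pmf map_pmf_comp dest!: ar_path_len intro!: bind_pmf_cong map_pmf_cong last_drop[symmetric])
      also have "\<dots> = bind_pmf (map_pmf (drop n) (ar_path b e x0 (n + k))) (\<lambda>ys. map_pmf (\<lambda>y. ys @ [y]) (ar_step b e (last ys)))"
        by (simp add: bind_map_pmf)
      also have "\<dots> = ar_path b e x0 (Suc k)"
        using Suc by simp
      finally show ?case .
    qed
  qed
qed

lemma ar_stationary_marg:
  assumes "ar_stationary b e x0"
  shows "ar_marg b e x0 n = x0"
proof -
  have "map_pmf (drop n) (ar_path b e x0 n) = map_pmf (\<lambda>x. [x]) x0"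
    using assms unfolding ar_stationary_def by (metis add_0_right ar_path.simps(1))
  then have "map_pmf hd (map_pmf (drop n) (ar_path b e x0 n)) = map_pmf hd (map_pmf (\<lambda>x. [x]) x0)"
    by simp
  moreover have "map_pmf hd (map_pmf (drop n) (ar_path b e x0 n)) = ar_marg b e x0 n"
    unfolding ar_marg_def map_pmf_comp
    by (intro map_pmf_cong refl) (auto dest!: ar_path_len simp: hd_drop_conv_nth)
  ultimately show ?thesis by (simp add: map_pmf_comp)
qed

lemma fdd_scale:
  assumes H: "\<And>d. 0 \<le> d \<Longrightarrow> \<mu> (a * d) = thin b (\<mu> d)"
  shows "sorted ts \<Longrightarrow> (\<forall>t\<in>set ts. t0 \<le> t) \<Longrightarrow>
    levy_fdd_aux \<mu> (a * t0) w0 (map (\<lambda>t. a * t) ts) =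
    bind_pmf (levy_fdd_aux \<mu> t0 z0 ts) (thin_path_aux b z0 w0)"
proof (induction ts arbitrary: t0 z0 w0)
  case Nil
  then show ?case by (simp add: bind_return_pmf)
next
  case (Cons t ts)
  have IH: "levy_fdd_aux \<mu> (a * t) w (map (\<lambda>t. a * t) ts) =
      bind_pmf (levy_fdd_aux \<mu> t z ts) (thin_path_aux b z w)" for z w
    using Cons by (intro Cons.IH) auto
  have tt: "0 \<le> t - t0" using Cons.prems by auto
  have "bind_pmf (levy_fdd_aux \<mu> t0 z0 (t # ts)) (thin_path_aux b z0 w0) =
     bind_pmf (\<mu> (t - t0)) (\<lambda>d. bind_pmf (levy_fdd_aux \<mu> t (z0 + d) ts)
        (\<lambda>zs. bind_pmf (binomial_pmf d b) (\<lambda>e. map_pmf (\<lambda>ws. (w0 + e) # ws) (thin_path_aux b (z0 + d) (w0 + e) zs))))"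
    by (simp add: bind_assoc_pmf bind_map_pmf)
  also have "\<dots> = bind_pmf (\<mu> (t - t0)) (\<lambda>d. bind_pmf (binomial_pmf d b) (\<lambda>e.
        map_pmf (\<lambda>ws. (w0 + e) # ws) (bind_pmf (levy_fdd_aux \<mu> t (z0 + d) ts) (thin_path_aux b (z0 + d) (w0 + e)))))"
    by (subst bind_commute_pmf) (simp add: map_bind_pmf)
  also have "\<dots> = bind_pmf (\<mu> (t - t0)) (\<lambda>d. bind_pmf (binomial_pmf d b) (\<lambda>e.
        map_pmf (\<lambda>ws. (w0 + e) # ws) (levy_fdd_aux \<mu> (a * t) (w0 + e) (map (\<lambda>t. a * t) ts))))"
    by (simp add: IH[symmetric])
  also have "\<dots> = bind_pmf (thin b (\<mu> (t - t0))) (\<lambda>e.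
        map_pmf (\<lambda>ws. (w0 + e) # ws) (levy_fdd_aux \<mu> (a * t) (w0 + e) (map (\<lambda>t. a * t) ts)))"
    by (simp add: thin_def bind_assoc_pmf)
  also have "\<dots> = levy_fdd_aux \<mu> (a * t0) w0 (map (\<lambda>t. a * t) (t # ts))"
    using H[OF tt] by (simp add: right_diff_distrib)
  finally show ?case ..
qed

lemma fdd_single: "levy_fdd \<mu> [x] = map_pmf (\<lambda>d. [d]) (\<mu> x)"
  unfolding levy_fdd_def by (simp add: map_pmf_def bind_return_pmf)

lemma thin_path_single: "thin_path c [d] = map_pmf (\<lambda>e. [e]) (binomial_pmf d c)"
  unfolding thin_path_def by (simp add: map_pmf_def bind_return_pmf)

theorem theorem2p4:
  fixes b \<alpha> :: real and \<mu> :: "real \<Rightarrow> nat pmf"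
  assumes "0 < b" and "b < 1" and "0 < \<alpha>" and "\<alpha> \<le> 1"
    and "levy_process \<mu>"
  shows "(semi_selfsimilar \<mu> (b powr \<alpha>) (1 / \<alpha>) \<longrightarrow>
            ar_stationary b (thin b (\<mu> (b powr (- \<alpha>) - 1))) (\<mu> 1) \<and>
            (\<forall>n. discrete_semistable (b powr \<alpha>) b
                    (ar_marg b (thin b (\<mu> (b powr (- \<alpha>) - 1))) (\<mu> 1) n)))
       \<and> (ar_stationary b (thin b (\<mu> (b powr (- \<alpha>) - 1))) (\<mu> 1) \<longrightarrow>
            (\<forall>n. discrete_semistable (b powr \<alpha>) b
                    (ar_marg b (thin b (\<mu> (b powr (- \<alpha>) - 1))) (\<mu> 1) n)) \<and>
            semi_selfsimilar \<mu> (b powr \<alpha>) (1 / \<alpha>))"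
proof -
  note b = assms(1,2)
  note al = assms(3,4)
  define a where "a = b powr \<alpha>"
  define P where "P = pgf (\<mu> 1)"
  define c where "c = 1 / a - 1"
  define e where "e = thin b (\<mu> (b powr (- \<alpha>) - 1))"
  have a0: "0 < a" unfolding a_def using b by simp
  have a1: "a < 1" unfolding a_def using b al
    by (metis powr_less_mono2 powr_one_eq_one less_le)
  have c0: "0 < c" unfolding c_def using a0 a1 by (simp add: field_simps)
  have ce: "b powr (- \<alpha>) - 1 = c"
    unfolding c_def a_def by (simp add: powr_minus_divide)
  have e_def': "e = thin b (\<mu> c)" unfolding e_def ce ..
  have ab: "a powr (1 / \<alpha>) = b"
    unfolding a_def using al b by (simp add: powr_powr)
  have lev: "\<mu> 0 = return_pmf 0 \<and>
     (\<forall>s t. 0 \<le> s \<longrightarrow> 0 \<le> t \<longrightarrow>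
        \<mu> (s + t) = map_pmf (\<lambda>(x, y). x + y) (pair_pmf (\<mu> s) (\<mu> t))) \<and>
     (\<forall>t>0. \<forall>s\<in>{0..1}. pgf (\<mu> t) s = pgf (\<mu> 1) s powr t)"
    using assms(5) unfolding levy_process_def .
  have L0: "\<mu> 0 = return_pmf 0" using lev by (rule conjunct1)
  have Lp0: "\<forall>t>0. \<forall>s\<in>{0..1}. pgf (\<mu> t) s = pgf (\<mu> 1) s powr t"
    using conjunct2[OF conjunct2[OF lev]] .
  have Lp: "pgf (\<mu> t) s = P s powr t" if "0 < t" "0 \<le> s" "s \<le> 1" for t s
  proof -
    have "s \<in> {0..1}" using that by simp
    then show ?thesis using Lp0 that(1) unfolding P_def by blast
  qed
  have u01: "0 < 1 - b + b * s" "1 - b + b * s \<le> 1" if "0 \<le> s" "s \<le> 1" for s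
    using b that by (auto intro: add_pos_nonneg simp: mult_le_cancel_left1)
  have Ppos: "0 < P s" if "0 < s" "s \<le> 1" for s
    unfolding P_def using that by (rule pgf_pos)
  have Pnn: "0 \<le> P s" if "0 \<le> s" "s \<le> 1" for s
    unfolding P_def using pgf_bounds[OF that] by auto
  define KEY where "KEY \<longleftrightarrow> (\<forall>s. 0 \<le> s \<longrightarrow> s \<le> 1 \<longrightarrow> P (1 - b + b * s) = P s powr a)"
  have stepP: "pgf (bind_pmf (\<mu> 1) (ar_step b e)) s = P (1 - b + b * s) * P (1 - b + b * s) powr c"
    if "0 \<le> s" "s \<le> 1" for s
    using that b u01[OF that] c0
    by (simp add: pgf_step e_def' pgf_thin Lp P_def[symmetric] less_imp_le)
  have K1: "KEY" if "\<mu> a = thin b (\<mu> 1)"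
    unfolding KEY_def
  proof (intro allI impI)
    fix s :: real assume s: "0 \<le> s" "s \<le> 1"
    have "P (1 - b + b * s) = pgf (thin b (\<mu> 1)) s"
      unfolding P_def using b s by (simp add: pgf_thin)
    also have "\<dots> = P s powr a" using Lp[OF a0 s] that by simp
    finally show "P (1 - b + b * s) = P s powr a" .
  qed
  have K2: "\<mu> (a * t) = thin b (\<mu> t)" if KEY "0 \<le> t" for t
  proof (cases "t = 0")
    case True
    then show ?thesis using L0 b by (simp add: thin_def bind_return_pmf binomial_pmf_0)
  next
    case False
    then have t0: "0 < t" using that by simp
    show ?thesis
    proof (rule pgf_unique)
      fix s :: real assume s: "0 \<le> s" "s \<le> 1"
      have "pgf (thin b (\<mu> t)) s = P (1 - b + b * s) powr t"
        using b s t0 u01[OF s] by (simp add: pgf_thin Lp)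
      also have "\<dots> = P s powr (a * t)"
        using that(1) s unfolding KEY_def by (simp add: powr_powr)
      also have "\<dots> = pgf (\<mu> (a * t)) s"
        using a0 t0 s by (simp add: Lp)
      finally show "pgf (\<mu> (a * t)) s = pgf (thin b (\<mu> t)) s" ..
    qed
  qed
  have K3: "bind_pmf (\<mu> 1) (ar_step b e) = \<mu> 1" if KEY
  proof (rule pgf_unique)
    fix s :: real assume s: "0 \<le> s" "s \<le> 1"
    have "pgf (bind_pmf (\<mu> 1) (ar_step b e)) s = P s powr a * (P s powr a) powr c"
      using that s unfolding KEY_def by (simp add: stepP)
    also have "\<dots> = P s powr (a + a * c)"
      by (simp add: powr_powr powr_add)
    also have "a + a * c = 1" unfolding c_def using a0 by (simp add: field_simps)
    also have "P s powr 1 = pgf (\<mu> 1) s" using Pnn[OF s] P_def by simp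
    finally show "pgf (bind_pmf (\<mu> 1) (ar_step b e)) s = pgf (\<mu> 1) s" .
  qed
  have K4: "discrete_semistable a b (\<mu> 1)" if KEY
    unfolding discrete_semistable_def
  proof (intro conjI ballI)
    show "0 < a" "a < 1" "0 < b" "b < 1" using a0 a1 b by auto
    show "\<exists>\<alpha>. 0 < \<alpha> \<and> \<alpha> \<le> 1 \<and> b = a powr (1 / \<alpha>)"
      using al ab by auto
    fix s :: real assume "s \<in> {0..1}"
    then have s: "0 \<le> s" "s \<le> 1" by auto
    show "pgf (\<mu> 1) s powr a = pgf (\<mu> 1) (1 - b + b * s)"
      using that s unfolding KEY_def P_def by simp
    show "pgf (\<mu> 1) s \<noteq> 0"
    proof
      assume z: "pgf (\<mu> 1) s = 0"
      have "P (1 - b + b * s) = 0"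
        using that s z unfolding KEY_def P_def by simp
      moreover have "0 < P (1 - b + b * s)" using Ppos u01[OF s] by auto
      ultimately show False by simp
    qed
  qed
  have K5: KEY if "bind_pmf (\<mu> 1) (ar_step b e) = \<mu> 1"
    unfolding KEY_def
  proof (intro allI impI)
    fix s :: real assume s: "0 \<le> s" "s \<le> 1"
    define v where "v = P (1 - b + b * s)"
    have v0: "0 < v" unfolding v_def using Ppos u01[OF s] by auto
    have "P s = v * v powr c" using stepP[OF s] that unfolding v_def P_def by simp
    also have "\<dots> = v powr (1 + c)" using v0 by (simp add: powr_add)
    finally have "P s powr a = (v powr (1 + c)) powr a" by simp
    also have "\<dots> = v powr ((1 + c) * a)" by (simp add: powr_powr)
    also have "(1 + c) * a = 1" unfolding c_def using a0 by (simp add: field_simps)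
    finally show "P (1 - b + b * s) = P s powr a" using v0 unfolding v_def by simp
  qed
  have K6: "semi_selfsimilar \<mu> a (1 / \<alpha>)" if "\<And>t. 0 \<le> t \<Longrightarrow> \<mu> (a * t) = thin b (\<mu> t)"
    unfolding semi_selfsimilar_def ab levy_fdd_def thin_path_def
  proof (intro allI impI)
    fix ts :: "real list" assume "sorted ts" "\<forall>t\<in>set ts. 0 \<le> t"
    from fdd_scale[of \<mu> a b ts 0 0 0, OF that this]
    show "levy_fdd_aux \<mu> 0 0 (map ((*) a) ts) = levy_fdd_aux \<mu> 0 0 ts \<bind> thin_path_aux b 0 0"
      by simp
  qed
  have K7: "\<mu> a = thin b (\<mu> 1)" if "semi_selfsimilar \<mu> a (1 / \<alpha>)"
  proof -
    have "levy_fdd \<mu> [a * 1] = bind_pmf (levy_fdd \<mu> [1]) (thin_path b)"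
      using that unfolding semi_selfsimilar_def ab by (metis list.simps(8,9) sorted1 empty_iff list.set(1,2) insert_iff zero_le_one)
    then have "map_pmf (\<lambda>d. [d]) (\<mu> a) = map_pmf (\<lambda>e. [e]) (thin b (\<mu> 1))"
      by (simp add: fdd_single thin_path_single bind_map_pmf thin_def map_bind_pmf)
    then have "map_pmf hd (map_pmf (\<lambda>d. [d]) (\<mu> a)) = map_pmf hd (map_pmf (\<lambda>e. [e]) (thin b (\<mu> 1)))"
      by simp
    then show ?thesis by (simp add: map_pmf_comp)
  qed
  show ?thesis
    unfolding a_def[symmetric] e_def[symmetric]
  proof (intro conjI impI allI)
    assume ss: "semi_selfsimilar \<mu> a (1 / \<alpha>)"
    have KEY using K1 K7 ss by blast
    then have inv: "bind_pmf (\<mu> 1) (ar_step b e) = \<mu> 1" by (rule K3)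
    show "ar_stationary b e (\<mu> 1)" using ar_invariant(2)[OF inv] .
    fix n
    show "discrete_semistable a b (ar_marg b e (\<mu> 1) n)"
      using ar_invariant(1)[OF inv] K4 \<open>KEY\<close> by simp
  next
    assume st: "ar_stationary b e (\<mu> 1)"
    have "bind_pmf (\<mu> 1) (ar_step b e) = \<mu> 1"
      using ar_stationary_marg[OF st, of 1] ar_marg_Suc[of b e "\<mu> 1" 0] ar_marg_0[of b e "\<mu> 1"] by simp
    then have KEY by (rule K5)
    {
      fix n
      show "discrete_semistable a b (ar_marg b e (\<mu> 1) n)"
        using ar_stationary_marg[OF st] K4 \<open>KEY\<close> by simp
    }
    show "semi_selfsimilar \<mu> a (1 / \<alpha>)"
      using K6 K2 \<open>KEY\<close> by blast
  qed
qed

end
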